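(* Let $\nu$ be a probability measure on $[-\pi,\pi]$ that is absolutely continuous with density $p\in\mathcal{L}\cap\mathcal{A}$, and let $u$ denote the uniform distribution on $[-\pi,\pi]$. Let $L/N\to c>0$. For a phase distribution $\mu\in\{\nu,u\}$ let ${\bf V}_\mu$ be the $N\times L$ random Vandermonde matrix with phase distribution $\mu$ and set $m_{\mu,n}:=\lim_{N\to\infty}\mathbb{E}[\mathrm{tr}_L(({\bf V}_\mu^*{\bf V}_\mu)^n)]$. Then $m_{u,n}\le m_{\nu,n}$ for all $n\ge 1$.
   Context: An $N\times L$ random Vandermonde matrix with phase distribution $\mu$ is ${\bf V}=N^{-1/2}\big(e^{-j(k-1)\theta_l}\big)_{1\le k\le N,1\le l\le L}$ where $\theta_1,\dots,\theta_L$ are i.i.d. with law $\mu$ on $[-\pi,\pi]$. $\mathrm{tr}_L=\frac1L\mathrm{Tr}$ is the normalized trace. $\mathcal{L}:=\bigcap_{q\ge1}L^q([-\pi,\pi])$; $\mathcal{A}$ is the class of densities on $[-\pi,\pi]$ with all Fourier coefficients $\int e^{-imt}p(t)\,dt\ge0$, $m\in\mathbb{Z}$. *)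

theory Defs
  imports "HOL-Probability.Probability" "Jordan_Normal_Form.Schur_Decomposition"
begin

definition mat_trace :: "complex mat \<Rightarrow> complex" where
  "mat_trace A = (\<Sum>i<dim_row A. A $$ (i, i))"

text \<open>N x L random Vandermonde matrix for phases theta 0, ..., theta (L-1):
  entry (k,l) (0-based) is N^(-1/2) * exp(-j k theta_l), i.e. the paper's
  exponent (k-1) with 1-based row index k.\<close>
definition vandermonde :: "nat \<Rightarrow> nat \<Rightarrow> (nat \<Rightarrow> real) \<Rightarrow> complex mat" where
  "vandermonde N L \<theta> =
     mat N L (\<lambda>(k, l). exp (- (\<i> * of_nat k * of_real (\<theta> l))) / of_real (sqrt (real N)))"

definition vdm_moment :: "real measure \<Rightarrow> nat \<Rightarrow> nat \<Rightarrow> nat \<Rightarrow> complex" where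
  "vdm_moment \<mu> N L n =
     (\<integral>\<theta>. mat_trace ((mat_adjoint (vandermonde N L \<theta>) * vandermonde N L \<theta>) ^\<^sub>m n) / of_nat L
        \<partial>(PiM {..<L} (\<lambda>_. \<mu>)))"

definition uniform_phase :: "real measure" where
  "uniform_phase = uniform_measure lborel {-pi..pi}"

definition density_phase :: "(real \<Rightarrow> real) \<Rightarrow> real measure" where
  "density_phase p = density lborel (\<lambda>t. ennreal (indicator {-pi..pi} t * p t))"

definition is_phase_density :: "(real \<Rightarrow> real) \<Rightarrow> bool" where
  "is_phase_density p \<longleftrightarrow> p \<in> borel_measurable borel \<and> (\<forall>t\<in>{-pi..pi}. 0 \<le> p t)
     \<and> set_integrable lborel {-pi..pi} p \<and> (LINT t:{-pi..pi}|lborel. p t) = 1"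

definition in_class_L :: "(real \<Rightarrow> real) \<Rightarrow> bool" where
  "in_class_L p \<longleftrightarrow> p \<in> borel_measurable borel \<and>
     (\<forall>q::real. 1 \<le> q \<longrightarrow> set_integrable lborel {-pi..pi} (\<lambda>t. \<bar>p t\<bar> powr q))"

definition fourier_coeff :: "(real \<Rightarrow> real) \<Rightarrow> int \<Rightarrow> complex" where
  "fourier_coeff p m = (LINT t:{-pi..pi}|lborel. exp (- (\<i> * of_int m * of_real t)) * of_real (p t))"

definition in_class_A :: "(real \<Rightarrow> real) \<Rightarrow> bool" where
  "in_class_A p \<longleftrightarrow> is_phase_density p \<and>
     (\<forall>m::int. Im (fourier_coeff p m) = 0 \<and> 0 \<le> Re (fourier_coeff p m))"

end

theory Submission
  imports Defs
begin

definition psi :: "real measure \<Rightarrow> int \<Rightarrow> complex" where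
  "psi \<mu> k = (\<integral>t. exp (\<i> * of_int k * of_real t) \<partial>\<mu>)"

lemma meas_exp[measurable]: "(\<lambda>t::real. exp (\<i> * of_int k * of_real t)) \<in> borel_measurable borel"
  by (intro borel_measurable_continuous_onI continuous_intros)

lemma uniform_prob: "prob_space uniform_phase"
  unfolding uniform_phase_def by (intro prob_space_uniform_measure) auto

lemma uniform_sets: "sets uniform_phase = sets borel"
  unfolding uniform_phase_def by simp

lemma lint_exp:
  assumes "k \<noteq> 0"
  shows "(LINT t:{-pi..pi}|lborel. exp (\<i> * of_int k * of_real t)) = 0"
proof -
  have ci: "continuous_on {-pi..pi} (\<lambda>t::real. exp (\<i> * of_int k * of_real t))"
    by (intro continuous_intros)
  have si: "set_integrable lborel {-pi..pi} (\<lambda>t::real. exp (\<i> * of_int k * of_real t))"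
    by (rule borel_integrable_atLeastAtMost'[OF ci])
  have d: "((\<lambda>t::real. exp (\<i> * of_int k * of_real t) / (\<i> * of_int k)) has_vector_derivative
          exp (\<i> * of_int k * of_real x)) (at x within {-pi..pi})" for x
  proof -
    have "((\<lambda>z. exp (\<i> * of_int k * z) / (\<i> * of_int k)) has_field_derivative
          exp (\<i> * of_int k * of_real x)) (at (of_real x))"
      using assms by (auto intro!: derivative_eq_intros)
    then show ?thesis by (rule has_vector_derivative_real_field)
  qed
  have "((\<lambda>t::real. exp (\<i> * of_int k * of_real t)) has_integral
      (exp (\<i> * of_int k * of_real pi) / (\<i> * of_int k) - exp (\<i> * of_int k * of_real (-pi)) / (\<i> * of_int k))) {-pi..pi}"
    by (rule fundamental_theorem_of_calculus) (use d in auto)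
  moreover have "exp (\<i> * of_int k * of_real pi) = exp (\<i> * of_int k * of_real (-pi))"
  proof -
    have "exp (\<i> * of_int k * of_real pi) = exp (\<i> * of_int k * of_real (-pi)) * exp (2 * pi * \<i> * of_int k)"
    proof -
      have "\<i> * of_int k * of_real pi = \<i> * of_int k * of_real (-pi) + 2 * pi * \<i> * of_int k"
        by (simp add: algebra_simps)
      then show ?thesis by (metis exp_add)
    qed
    also have "exp (2 * pi * \<i> * of_int k) = 1"
      using exp_integer_2pi[of "of_int k"] by (simp add: algebra_simps)
    finally show ?thesis by simp
  qed
  ultimately have "((\<lambda>t::real. exp (\<i> * of_int k * of_real t)) has_integral 0) {-pi..pi}" by simp
  then show ?thesis using set_borel_integral_eq_integral(2)[OF si] by (simp add: integral_unique)
qed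

lemma psi0: "prob_space \<mu> \<Longrightarrow> psi \<mu> 0 = 1"
  unfolding psi_def by (simp add: prob_space.prob_space)

lemma uniform_density: "uniform_phase = density lborel (\<lambda>x. ennreal (indicator {-pi..pi} x / (2*pi)))"
proof -
  have "emeasure lborel {-pi..pi} = ennreal (2*pi)" by simp
  moreover have "1 / ennreal (2*pi) = ennreal (1/(2*pi))" using divide_ennreal[of 1 "2*pi"] by simp
  then show ?thesis
    unfolding uniform_phase_def uniform_measure_def
    by (intro density_cong) (auto simp: divide_ennreal split: split_indicator)
qed

lemma psi_uniform: "psi uniform_phase k = (if k = 0 then 1 else 0)"
proof (cases "k = 0")
  case True then show ?thesis using psi0 uniform_prob by simp
next
  case False
  have "psi uniform_phase k = (\<integral>t. (indicator {-pi..pi} t / (2*pi)) *\<^sub>R exp (\<i> * of_int k * of_real t) \<partial>lborel)"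
    unfolding psi_def uniform_density
    by (subst integral_density) auto
  also have "\<dots> = (\<integral>t. (1/(2*pi)) *\<^sub>R (indicator {-pi..pi} t *\<^sub>R exp (\<i> * of_int k * of_real t)) \<partial>lborel)"
    by (intro Bochner_Integration.integral_cong) (auto split: split_indicator)
  also have "\<dots> = (1/(2*pi)) *\<^sub>R (LINT t:{-pi..pi}|lborel. exp (\<i> * of_int k * of_real t))"
    unfolding set_lebesgue_integral_def by (rule integral_scaleR_right)
  also have "\<dots> = 0" using lint_exp[OF False] by simp
  finally show ?thesis using False by simp
qed

lemma density_sets: "sets (density_phase p) = sets borel"
  unfolding density_phase_def by simp

lemma density_prob:
  assumes "is_phase_density p"
  shows "prob_space (density_phase p)"
proof
  have pm: "p \<in> borel_measurable borel" and si: "set_integrable lborel {-pi..pi} p"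
    and one: "(LINT t:{-pi..pi}|lborel. p t) = 1" and nn: "\<forall>t\<in>{-pi..pi}. 0 \<le> p t"
    using assms unfolding is_phase_density_def by auto
  have int: "integrable lborel (\<lambda>t. indicator {-pi..pi} t * p t)"
    using si unfolding set_integrable_def by simp
  have "emeasure (density_phase p) (space (density_phase p)) =
      (\<integral>\<^sup>+ t. ennreal (indicator {-pi..pi} t * p t) \<partial>lborel)"
    unfolding density_phase_def using pm by (simp add: emeasure_density)
  also have "\<dots> = ennreal (\<integral>t. indicator {-pi..pi} t * p t \<partial>lborel)"
    using int nn by (intro nn_integral_eq_integral) (auto split: split_indicator)
  also have "(\<integral>t. indicator {-pi..pi} t * p t \<partial>lborel) = 1"
    using one unfolding set_lebesgue_integral_def by simp
  finally show "emeasure (density_phase p) (space (density_phase p)) = 1" by simp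
qed

lemma psi_density:
  assumes "is_phase_density p"
  shows "psi (density_phase p) k = fourier_coeff p (-k)"
proof -
  have pm[measurable]: "p \<in> borel_measurable borel" and nn: "\<forall>t\<in>{-pi..pi}. 0 \<le> p t"
    using assms unfolding is_phase_density_def by auto
  have "psi (density_phase p) k = (\<integral>t. (indicator {-pi..pi} t * p t) *\<^sub>R exp (\<i> * of_int k * of_real t) \<partial>lborel)"
    unfolding psi_def density_phase_def
    by (subst integral_density) (use nn in \<open>auto split: split_indicator\<close>)
  also have "\<dots> = (\<integral>t. indicator {-pi..pi} t *\<^sub>R (exp (- (\<i> * of_int (-k) * of_real t)) * of_real (p t)) \<partial>lborel)"
    by (intro Bochner_Integration.integral_cong) (auto simp: scaleR_conv_of_real)
  finally show ?thesis unfolding fourier_coeff_def set_lebesgue_integral_def .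
qed

definition e :: "nat \<Rightarrow> (nat \<Rightarrow> int) \<Rightarrow> (nat \<Rightarrow> real) \<Rightarrow> complex" where
  "e L m \<theta> = (\<Prod>l<L. exp (\<i> * of_int (m l) * of_real (\<theta> l)))"

definition evl :: "nat \<Rightarrow> (real \<times> (nat \<Rightarrow> int)) list \<Rightarrow> (nat \<Rightarrow> real) \<Rightarrow> complex" where
  "evl L xs \<theta> = (\<Sum>x\<leftarrow>xs. of_real (fst x) * e L (snd x) \<theta>)"

lemma e_int:
  assumes P: "prob_space \<mu>" and S: "sets \<mu> = sets borel"
  shows "integrable (PiM {..<L} (\<lambda>_. \<mu>)) (e L m)"
    "(\<integral>\<theta>. e L m \<theta> \<partial>PiM {..<L} (\<lambda>_. \<mu>)) = (\<Prod>l<L. psi \<mu> (m l))"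
proof -
  interpret prob_space \<mu> by (rule P)
  interpret product_sigma_finite "\<lambda>_. \<mu>" by unfold_locales
  have meas: "(\<lambda>t::real. exp (\<i> * of_int k * of_real t)) \<in> borel_measurable \<mu>" for k
    using meas_exp[of k] by (simp add: measurable_cong_sets[OF S refl])
  have int: "integrable \<mu> (\<lambda>t::real. exp (\<i> * of_int k * of_real t))" for k
    by (rule integrable_const_bound[where B=1]) (auto simp: norm_exp_i_times meas)
  show "integrable (PiM {..<L} (\<lambda>_. \<mu>)) (e L m)"
    unfolding e_def[abs_def] using product_integrable_prod[of "{..<L}" "\<lambda>l t. exp (\<i> * of_int (m l) * of_real t)"] int
    by simp
  show "(\<integral>\<theta>. e L m \<theta> \<partial>PiM {..<L} (\<lambda>_. \<mu>)) = (\<Prod>l<L. psi \<mu> (m l))"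
    unfolding e_def psi_def using product_integral_prod[of "{..<L}" "\<lambda>l t. exp (\<i> * of_int (m l) * of_real t)"] int
    by simp
qed

lemma evl_int:
  assumes P: "prob_space \<mu>" and S: "sets \<mu> = sets borel"
  shows "integrable (PiM {..<L} (\<lambda>_. \<mu>)) (evl L xs) \<and>
    (\<integral>\<theta>. evl L xs \<theta> \<partial>PiM {..<L} (\<lambda>_. \<mu>)) = (\<Sum>(r,m)\<leftarrow>xs. of_real r * (\<Prod>l<L. psi \<mu> (m l)))"
proof (induction xs)
  case Nil then show ?case by (simp add: evl_def[abs_def])
next
  case (Cons x xs)
  obtain r m where x: "x = (r, m)" by force
  have ev: "evl L (x # xs) = (\<lambda>\<theta>. of_real r * e L m \<theta> + evl L xs \<theta>)"
    by (auto simp: evl_def x)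
  have i1: "integrable (PiM {..<L} (\<lambda>_. \<mu>)) (\<lambda>\<theta>. of_real r * e L m \<theta>)"
    using e_int[OF P S] by simp
  show ?case unfolding ev using Cons i1 e_int[OF P S, of L m] by (simp add: x)
qed

definition TP :: "nat \<Rightarrow> ((nat \<Rightarrow> real) \<Rightarrow> complex) \<Rightarrow> bool" where
  "TP L F \<longleftrightarrow> (\<exists>xs. (\<forall>x\<in>set xs. 0 \<le> fst x) \<and> F = evl L xs)"

definition pl :: "(real \<times> (nat \<Rightarrow> int)) list \<Rightarrow> (real \<times> (nat \<Rightarrow> int)) list \<Rightarrow> (real \<times> (nat \<Rightarrow> int)) list" where
  "pl xs ys = concat (map (\<lambda>(r1,m1). map (\<lambda>(r2,m2). (r1*r2, \<lambda>l. m1 l + m2 l)) ys) xs)"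

lemma e_add: "e L (\<lambda>l. m1 l + m2 l) \<theta> = e L m1 \<theta> * e L m2 \<theta>"
  unfolding e_def prod.distrib[symmetric]
  by (intro prod.cong refl) (simp add: exp_add[symmetric] algebra_simps)

lemma evl_pl: "evl L (pl xs ys) \<theta> = evl L xs \<theta> * evl L ys \<theta>"
proof (induction xs)
  case Nil then show ?case by (simp add: pl_def evl_def)
next
  case (Cons x xs)
  obtain r m where x: "x = (r, m)" by force
  have "(\<Sum>y\<leftarrow>ys. of_real (r * fst y) * e L (\<lambda>l. m l + snd y l) \<theta>) = of_real r * e L m \<theta> * evl L ys \<theta>"
    unfolding evl_def
    by (induction ys) (auto simp: e_add algebra_simps)
  then have "evl L (map (\<lambda>(r2,m2). (r*r2, \<lambda>l. m l + m2 l)) ys) \<theta> = of_real r * e L m \<theta> * evl L ys \<theta>"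
    unfolding evl_def by (simp add: comp_def case_prod_beta)
  moreover have "evl L (pl (x # xs) ys) \<theta> = evl L (map (\<lambda>(r2,m2). (r*r2, \<lambda>l. m l + m2 l)) ys) \<theta> + evl L (pl xs ys) \<theta>"
    by (simp add: pl_def evl_def x)
  ultimately show ?case using Cons by (simp add: x evl_def algebra_simps)
qed

lemma TP_mult: "TP L F \<Longrightarrow> TP L G \<Longrightarrow> TP L (\<lambda>\<theta>. F \<theta> * G \<theta>)"
  unfolding TP_def
proof (elim exE conjE)
  fix xs ys assume 1: "\<forall>x\<in>set xs. 0 \<le> fst x" "F = evl L xs" and 2: "\<forall>x\<in>set ys. 0 \<le> fst x" "G = evl L ys"
  show "\<exists>zs. (\<forall>x\<in>set zs. 0 \<le> fst x) \<and> (\<lambda>\<theta>. F \<theta> * G \<theta>) = evl L zs"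
  proof (intro exI[of _ "pl xs ys"] conjI)
    show "\<forall>x\<in>set (pl xs ys). 0 \<le> fst x" using 1 2 by (auto simp: pl_def) (metis fst_conv mult_nonneg_nonneg)
    show "(\<lambda>\<theta>. F \<theta> * G \<theta>) = evl L (pl xs ys)" using 1 2 by (simp add: evl_pl fun_eq_iff)
  qed
qed

lemma evl_append: "evl L (xs @ ys) \<theta> = evl L xs \<theta> + evl L ys \<theta>"
  by (simp add: evl_def)

lemma TP_add: "TP L F \<Longrightarrow> TP L G \<Longrightarrow> TP L (\<lambda>\<theta>. F \<theta> + G \<theta>)"
  unfolding TP_def
proof (elim exE conjE)
  fix xs ys assume 1: "\<forall>x\<in>set xs. 0 \<le> fst x" "F = evl L xs" and 2: "\<forall>x\<in>set ys. 0 \<le> fst x" "G = evl L ys"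
  show "\<exists>zs. (\<forall>x\<in>set zs. 0 \<le> fst x) \<and> (\<lambda>\<theta>. F \<theta> + G \<theta>) = evl L zs"
    using 1 2 by (intro exI[of _ "xs @ ys"]) (auto simp: evl_append)
qed

lemma TP_const: "0 \<le> r \<Longrightarrow> TP L (\<lambda>\<theta>. of_real r)"
  unfolding TP_def by (intro exI[of _ "[(r, \<lambda>_. 0)]"]) (auto simp: evl_def e_def)

lemma TP_sum: "finite A \<Longrightarrow> (\<And>a. a \<in> A \<Longrightarrow> TP L (F a)) \<Longrightarrow> TP L (\<lambda>\<theta>. \<Sum>a\<in>A. F a \<theta>)"
proof (induction A rule: finite_induct)
  case empty then show ?case using TP_const[of 0 L] by simp
next
  case (insert a A) then show ?case using TP_add[of L "F a" "\<lambda>\<theta>. \<Sum>a\<in>A. F a \<theta>"] by simp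
qed

lemma TP_cong: "TP L F \<Longrightarrow> (\<And>\<theta>. F \<theta> = G \<theta>) \<Longrightarrow> TP L G"
proof -
  assume "TP L F" "\<And>\<theta>. F \<theta> = G \<theta>"
  then have "F = G" by auto
  then show ?thesis using \<open>TP L F\<close> by simp
qed

lemma TP_e: "0 \<le> r \<Longrightarrow> TP L (\<lambda>\<theta>. of_real r * e L m \<theta>)"
  unfolding TP_def by (intro exI[of _ "[(r, m)]"]) (auto simp: evl_def)

lemma e_pair:
  assumes "a < L" "b < L"
  shows "e L (\<lambda>l. (if l = a then int k else 0) - (if l = b then int k else 0)) \<theta> =
     exp (\<i> * of_nat k * of_real (\<theta> a)) * exp (- (\<i> * of_nat k * of_real (\<theta> b)))"
proof -
  have "e L (\<lambda>l. (if l = a then int k else 0) - (if l = b then int k else 0)) \<theta> =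
     exp (\<Sum>l<L. \<i> * of_int ((if l = a then int k else 0) - (if l = b then int k else 0)) * of_real (\<theta> l))"
    unfolding e_def by (simp add: exp_sum)
  also have "(\<Sum>l<L. \<i> * of_int ((if l = a then int k else 0) - (if l = b then int k else 0)) * of_real (\<theta> l))
     = (\<Sum>l<L. (if l = a then \<i> * of_nat k * of_real (\<theta> l) else 0)) - (\<Sum>l<L. (if l = b then \<i> * of_nat k * of_real (\<theta> l) else 0))"
    unfolding sum_subtractf[symmetric] by (intro sum.cong refl) (auto simp: algebra_simps)
  also have "\<dots> = \<i> * of_nat k * of_real (\<theta> a) - \<i> * of_nat k * of_real (\<theta> b)"
    using assms by simp
  finally show ?thesis by (simp add: exp_diff exp_minus field_simps)
qed


lemma adj_index:
  fixes V :: "complex mat"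
  assumes V: "V \<in> carrier_mat N L" and "a < L" "b < L"
  shows "(mat_adjoint V * V) $$ (a,b) = (\<Sum>k<N. cnj (V $$ (k,a)) * V $$ (k,b))"
proof -
  have r: "row (mat_adjoint V) a = conjugate (col V a)"
    unfolding mat_adjoint_def using assms by (subst mat_of_rows_row) (auto simp: cols_def)
  have "(mat_adjoint V * V) $$ (a,b) = row (mat_adjoint V) a \<bullet> col V b"
    using assms by (intro index_mult_mat(1)) (auto simp: mat_adjoint_def)
  also have "\<dots> = (\<Sum>k\<in>{0..<N}. cnj (V $$ (k,a)) * V $$ (k,b))"
    unfolding r scalar_prod_def using assms by (intro sum.cong) auto
  finally show ?thesis by (simp add: atLeast0LessThan)
qed


lemma sqrt_sq: "of_real (sqrt (real N)) * of_real (sqrt (real N)) = (of_nat N :: complex)"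
proof -
  have s1: "sqrt (real N) * sqrt (real N) = real N" by simp
  show ?thesis unfolding of_real_mult[symmetric] s1 by simp
qed

lemma c: "cnj (exp (- (\<i> * of_nat k * of_real (t::real)))) = exp (\<i> * of_nat k * of_real t)"
  by (simp add: exp_cnj)

lemma cnj_q: "cnj (exp (- (\<i> * of_nat k * of_real (ta::real))) / of_real (sqrt (real N))) *
       (exp (- (\<i> * of_nat k * of_real (tb::real))) / of_real (sqrt (real N))) =
       exp (\<i> * of_nat k * of_real ta) * exp (- (\<i> * of_nat k * of_real tb)) /
       (of_real (sqrt (real N)) * of_real (sqrt (real N)))"
  by (simp only: complex_cnj_divide c complex_cnj_complex_of_real times_divide_times_eq)

lemma adj_entry:
  assumes "a < L" "b < L"
  shows "(mat_adjoint (vandermonde N L \<theta>) * vandermonde N L \<theta>) $$ (a,b) =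
    (\<Sum>k<N. of_real (1 / real N) * (exp (\<i> * of_nat k * of_real (\<theta> a)) * exp (- (\<i> * of_nat k * of_real (\<theta> b)))))"
proof -
  have "(mat_adjoint (vandermonde N L \<theta>) * vandermonde N L \<theta>) $$ (a,b) =
    (\<Sum>k<N. cnj (exp (- (\<i> * of_nat k * of_real (\<theta> a))) / of_real (sqrt (real N))) *
       (exp (- (\<i> * of_nat k * of_real (\<theta> b))) / of_real (sqrt (real N))))"
    by (subst adj_index[where N=N and L=L]) (use assms in \<open>auto simp: vandermonde_def intro!: sum.cong\<close>)
  also have "\<dots> = (\<Sum>k<N. of_real (1 / real N) * (exp (\<i> * of_nat k * of_real (\<theta> a)) * exp (- (\<i> * of_nat k * of_real (\<theta> b)))))"
  proof (intro sum.cong refl)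
    fix k
    show "cnj (exp (- (\<i> * of_nat k * of_real (\<theta> a))) / of_real (sqrt (real N))) *
       (exp (- (\<i> * of_nat k * of_real (\<theta> b))) / of_real (sqrt (real N))) =
      of_real (1 / real N) * (exp (\<i> * of_nat k * of_real (\<theta> a)) * exp (- (\<i> * of_nat k * of_real (\<theta> b))))"
      unfolding cnj_q sqrt_sq by (simp add: divide_inverse mult.commute of_real_inverse)
  qed
  finally show ?thesis .
qed

lemma TP_adj_entry:
  assumes "a < L" "b < L"
  shows "TP L (\<lambda>\<theta>. (mat_adjoint (vandermonde N L \<theta>) * vandermonde N L \<theta>) $$ (a,b))"
proof -
  have "TP L (\<lambda>\<theta>. \<Sum>k<N. of_real (1 / real N) * e L (\<lambda>l. (if l = a then int k else 0) - (if l = b then int k else 0)) \<theta>)"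
    by (intro TP_sum TP_e) auto
  then show ?thesis
  proof (rule TP_cong)
    fix \<theta>
    show "(\<Sum>k<N. of_real (1 / real N) * e L (\<lambda>l. (if l = a then int k else 0) - (if l = b then int k else 0)) \<theta>) =
      (mat_adjoint (vandermonde N L \<theta>) * vandermonde N L \<theta>) $$ (a,b)"
      unfolding adj_entry[OF assms] e_pair[OF assms] by (rule refl)
  qed
qed

lemma vdm_carrier: "vandermonde N L \<theta> \<in> carrier_mat N L"
  unfolding vandermonde_def by (rule mat_carrier)

lemma adj_carrier: "mat_adjoint (vandermonde N L \<theta>) * vandermonde N L \<theta> \<in> carrier_mat L L"
proof (rule mult_carrier_mat)
  show "vandermonde N L \<theta> \<in> carrier_mat N L" by (rule vdm_carrier)
  have len: "length (map conjugate (cols (vandermonde N L \<theta>))) = L"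
    using vdm_carrier[of N L \<theta>] by (simp add: carrier_matD)
  have dr: "dim_row (vandermonde N L \<theta>) = N"
    using vdm_carrier[of N L \<theta>] by (simp add: carrier_matD)
  show "mat_adjoint (vandermonde N L \<theta>) \<in> carrier_mat L N"
    unfolding mat_adjoint_def dr using mat_of_rows_carrier(1)[of N "map conjugate (cols (vandermonde N L \<theta>))"]
    unfolding len .
qed

lemma TP_pow:
  assumes C: "\<And>\<theta>. M \<theta> \<in> carrier_mat L L"
    and T: "\<And>a b. a < L \<Longrightarrow> b < L \<Longrightarrow> TP L (\<lambda>\<theta>. M \<theta> $$ (a,b))"
  shows "a < L \<Longrightarrow> b < L \<Longrightarrow> TP L (\<lambda>\<theta>. (M \<theta> ^\<^sub>m n) $$ (a,b))"
proof (induction n arbitrary: a b)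
  case 0
  have "TP L (\<lambda>\<theta>. of_real (if a = b then 1 else 0))" by (rule TP_const) auto
  then show ?case
    by (rule TP_cong) (use 0 in \<open>auto simp: carrier_matD(1)[OF C]\<close>)
next
  case (Suc n)
  have PC: "M \<theta> ^\<^sub>m n \<in> carrier_mat L L" for \<theta> using C by (rule pow_carrier_mat)
  have "TP L (\<lambda>\<theta>. \<Sum>c\<in>{0..<L}. (M \<theta> ^\<^sub>m n) $$ (a,c) * M \<theta> $$ (c,b))"
    using Suc by (intro TP_sum TP_mult T) auto
  then show ?case
  proof (rule TP_cong)
    fix \<theta>
    show "(\<Sum>c\<in>{0..<L}. (M \<theta> ^\<^sub>m n) $$ (a,c) * M \<theta> $$ (c,b)) = (M \<theta> ^\<^sub>m Suc n) $$ (a, b)"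
      using PC[of \<theta>] C[of \<theta>] Suc.prems
      by (simp add: scalar_prod_def carrier_matD)
  qed
qed


lemma div_L: "complex_of_real (1 / real L) * S = S / of_nat L"
  by (simp add: divide_inverse mult.commute of_real_inverse)

lemma TP_trace:
  assumes C: "\<And>\<theta>. M \<theta> \<in> carrier_mat L L"
    and T: "\<And>a b. a < L \<Longrightarrow> b < L \<Longrightarrow> TP L (\<lambda>\<theta>. M \<theta> $$ (a,b))"
  shows "TP L (\<lambda>\<theta>. mat_trace (M \<theta> ^\<^sub>m n) / of_nat L)"
proof -
  have "TP L (\<lambda>\<theta>. complex_of_real (1 / real L) * (\<Sum>i<L. (M \<theta> ^\<^sub>m n) $$ (i,i)))"
  proof (rule TP_mult)
    show "TP L (\<lambda>\<theta>. complex_of_real (1 / real L))" by (rule TP_const) simp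
    show "TP L (\<lambda>\<theta>. \<Sum>i<L. (M \<theta> ^\<^sub>m n) $$ (i, i))"
    proof (rule TP_sum)
      fix i assume i: "i \<in> {..<L}"
      show "TP L (\<lambda>\<theta>. (M \<theta> ^\<^sub>m n) $$ (i, i))"
        using i by (intro TP_pow[of M] C T) auto
    qed simp
  qed
  then show ?thesis
  proof (rule TP_cong)
    fix \<theta>
    have d: "dim_row (M \<theta> ^\<^sub>m n) = L" using pow_carrier_mat[OF C] by (rule carrier_matD)
    show "complex_of_real (1 / real L) * (\<Sum>i<L. (M \<theta> ^\<^sub>m n) $$ (i,i)) = mat_trace (M \<theta> ^\<^sub>m n) / of_nat L"
      unfolding mat_trace_def d by (rule div_L)
  qed
qed


lemma TP_moment_integrand:
  "TP L (\<lambda>\<theta>. mat_trace ((mat_adjoint (vandermonde N L \<theta>) * vandermonde N L \<theta>) ^\<^sub>m n) / of_nat L)"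
proof (rule TP_trace[where M="\<lambda>\<theta>. mat_adjoint (vandermonde N L \<theta>) * vandermonde N L \<theta>"])
  fix \<theta> show "mat_adjoint (vandermonde N L \<theta>) * vandermonde N L \<theta> \<in> carrier_mat L L"
    by (rule adj_carrier)
next
  fix a b assume "a < L" "b < L"
  then show "TP L (\<lambda>\<theta>. (mat_adjoint (vandermonde N L \<theta>) * vandermonde N L \<theta>) $$ (a, b))"
    by (rule TP_adj_entry)
qed

lemma moment_repr:
  obtains xs where "\<forall>x\<in>set xs. 0 \<le> fst x"
    "\<And>\<mu>. prob_space \<mu> \<Longrightarrow> sets \<mu> = sets borel \<Longrightarrow>
       vdm_moment \<mu> N L n = (\<Sum>(r,m)\<leftarrow>xs. of_real r * (\<Prod>l<L. psi \<mu> (m l)))"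
proof -
  obtain xs where xs: "\<forall>x\<in>set xs. 0 \<le> fst x"
    and F: "(\<lambda>\<theta>. mat_trace ((mat_adjoint (vandermonde N L \<theta>) * vandermonde N L \<theta>) ^\<^sub>m n) / of_nat L) = evl L xs"
    using TP_moment_integrand[of L N n] unfolding TP_def by blast
  show ?thesis
  proof (rule that[OF xs])
    fix \<mu> :: "real measure" assume P: "prob_space \<mu>" and S: "sets \<mu> = sets borel"
    show "vdm_moment \<mu> N L n = (\<Sum>(r,m)\<leftarrow>xs. of_real r * (\<Prod>l<L. psi \<mu> (m l)))"
      unfolding vdm_moment_def F using evl_int[OF P S, of L xs] by simp
  qed
qed

lemma Re_sum_list: "Re (\<Sum>x\<leftarrow>xs. f x) = (\<Sum>x\<leftarrow>xs. Re (f x))"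
  by (induction xs) auto

lemma prod_psi_uniform:
  "(\<Prod>l<(L::nat). psi uniform_phase (m l)) = of_real (if \<forall>l<L. m l = 0 then 1 else 0)"
proof (cases "\<forall>l<L. m l = 0")
  case True
  then have "(\<Prod>l<(L::nat). psi uniform_phase (m l)) = (\<Prod>l<(L::nat). 1)"
    by (intro prod.cong refl) (simp add: psi_uniform)
  then show ?thesis unfolding if_P[OF True] by simp
next
  case False
  then obtain l where l: "l < L" "m l \<noteq> 0" by auto
  have "psi uniform_phase (m l) = 0" using l(2) by (simp add: psi_uniform)
  then have "(\<Prod>l<L. psi uniform_phase (m l)) = 0" using l(1) by (intro prod_zero) auto
  then show ?thesis unfolding if_not_P[OF False] by simp
qed

lemma compare:
  assumes A: "in_class_A p"
  shows "Re (vdm_moment uniform_phase N L n) \<le> Re (vdm_moment (density_phase p) N L n)"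
proof -
  have D: "is_phase_density p" using A unfolding in_class_A_def by simp
  define \<phi> where "\<phi> k = Re (fourier_coeff p (-k))" for k
  have psiv: "psi (density_phase p) k = of_real (\<phi> k)" for k
  proof -
    have "Im (fourier_coeff p (-k)) = 0" using A unfolding in_class_A_def by blast
    then show ?thesis unfolding psi_density[OF D] \<phi>_def by (simp add: complex_eq_iff)
  qed
  have phinn: "0 \<le> \<phi> k" for k using A unfolding in_class_A_def \<phi>_def by blast
  have phi0: "\<phi> 0 = 1"
    using psi0[OF density_prob[OF D]] psiv[of 0] by simp
  obtain xs where xs: "\<forall>x\<in>set xs. 0 \<le> fst x"
    and M: "\<And>\<mu>. prob_space \<mu> \<Longrightarrow> sets \<mu> = sets borel \<Longrightarrow>
       vdm_moment \<mu> N L n = (\<Sum>(r,m)\<leftarrow>xs. of_real r * (\<Prod>l<L. psi \<mu> (m l)))"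
    using moment_repr by blast
  have "Re (vdm_moment uniform_phase N L n) = (\<Sum>x\<leftarrow>xs. fst x * (if \<forall>l<L. snd x l = 0 then 1 else 0))"
    unfolding M[OF uniform_prob uniform_sets] Re_sum_list prod_psi_uniform
    by (simp add: case_prod_beta)
  also have "\<dots> \<le> (\<Sum>x\<leftarrow>xs. fst x * (\<Prod>l<L. \<phi> (snd x l)))"
  proof (rule sum_list_mono)
    fix x assume x: "x \<in> set xs"
    have "(if \<forall>l<L. snd x l = 0 then 1 else 0) \<le> (\<Prod>l<L. \<phi> (snd x l))"
      using phinn phi0 by (auto intro: prod_nonneg)
    then show "fst x * (if \<forall>l<L. snd x l = 0 then 1 else 0) \<le> fst x * (\<Prod>l<L. \<phi> (snd x l))"
      using xs x by (intro mult_left_mono) auto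
  qed
  also have "\<dots> = Re (vdm_moment (density_phase p) N L n)"
    unfolding M[OF density_prob[OF D] density_sets] Re_sum_list psiv
    by (simp add: case_prod_beta flip: of_real_prod)
  finally show ?thesis .
qed

theorem proposition2:
  fixes p :: "real \<Rightarrow> real" and L :: "nat \<Rightarrow> nat" and c :: real
    and m_u m_\<nu> :: "nat \<Rightarrow> real"
  assumes "in_class_L p" and "in_class_A p"
    and "c > 0" and "(\<lambda>N. real (L N) / real N) \<longlonglongrightarrow> c"
    and "\<And>n. (\<lambda>N. vdm_moment uniform_phase N (L N) n) \<longlonglongrightarrow> complex_of_real (m_u n)"
    and "\<And>n. (\<lambda>N. vdm_moment (density_phase p) N (L N) n) \<longlonglongrightarrow> complex_of_real (m_\<nu> n)"
  shows "\<forall>n\<ge>1. m_u n \<le> m_\<nu> n"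
proof (intro allI impI)
  fix n :: nat
  have u: "(\<lambda>N. Re (vdm_moment uniform_phase N (L N) n)) \<longlonglongrightarrow> m_u n"
    using tendsto_Re[OF assms(5)[of n]] by simp
  have v: "(\<lambda>N. Re (vdm_moment (density_phase p) N (L N) n)) \<longlonglongrightarrow> m_\<nu> n"
    using tendsto_Re[OF assms(6)[of n]] by simp
  show "m_u n \<le> m_\<nu> n"
    by (rule LIMSEQ_le[OF u v]) (use compare[OF assms(2)] in blast)
qed

end
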